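(* Let $\mathcal{X} \subseteq \mathbb{R}^m$ be countable and let $\widehat\nu = \sum_{j=1}^N \widehat\nu_j \delta_{\widehat x_j}$ be a probability mass function on $\mathcal{X}$ supported on $N$ distinct points $\widehat x_1,\dots,\widehat x_N \in \mathcal{X}$ with $\widehat\nu_j > 0$ for all $j$ and $\sum_j \widehat\nu_j = 1$. For $\varepsilon \ge 0$ let $\mathbb{B}_{\mathrm{KL}}(\widehat\nu,\varepsilon) = \{\nu \in \mathcal{M}(\mathcal{X}) : \mathrm{KL}(\widehat\nu \parallel \nu) \le \varepsilon\}$. Then for any $\varepsilon \ge 0$ and any $x \in \mathcal{X}$ there exists a measure $\nu^\star_{\mathrm{KL}} \in \mathbb{B}_{\mathrm{KL}}(\widehat\nu,\varepsilon)$ such that $$\sup_{\nu \in \mathbb{B}_{\mathrm{KL}}(\widehat\nu,\varepsilon)} \nu(x) = \nu^\star_{\mathrm{KL}}(x).$$ Moreover, $\nu^\star_{\mathrm{KL}}$ is supported on at most $N+1$ points and satisfies $\mathrm{supp}(\nu^\star_{\mathrm{KL}}) \subseteq \mathrm{supp}(\widehat\nu) \cup \{x\}$.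
   Context: $\mathcal{M}(\mathcal{X})$ is the set of probability mass functions supported on $\mathcal{X}$; $\delta_z$ is the Dirac measure at $z$. For $\nu_1,\nu_2 \in \mathcal{M}(\mathcal{X})$ with $\nu_1$ absolutely continuous with respect to $\nu_2$, the Kullback–Leibler divergence is $\mathrm{KL}(\nu_1 \parallel \nu_2) = \sum_{z \in \mathcal{X}} f(\nu_1(z)/\nu_2(z))\,\nu_2(z)$ with $f(t) = t\log t - t + 1$ (so $f(0)=1$). *)

theory Defs
  imports "HOL-Probability.Probability"
begin

definition kl_f :: "real \<Rightarrow> real" where
  "kl_f t = t * ln t - t + 1"

definition pmfs_on :: "'a set \<Rightarrow> 'a pmf set" where
  "pmfs_on X = {\<nu>. set_pmf \<nu> \<subseteq> X}"

text \<open>KL(nu1 || nu2) = sum over z in X of f(nu1 z / nu2 z) * nu2 z, as an extended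
  nonnegative real (all terms are nonnegative, so the sum always exists).\<close>
definition KL :: "'a set \<Rightarrow> 'a pmf \<Rightarrow> 'a pmf \<Rightarrow> ennreal" where
  "KL X \<nu>1 \<nu>2 = (\<integral>\<^sup>+ z. ennreal (kl_f (pmf \<nu>1 z / pmf \<nu>2 z) * pmf \<nu>2 z) \<partial>count_space X)"

definition abs_cont :: "'a pmf \<Rightarrow> 'a pmf \<Rightarrow> bool" where
  "abs_cont \<nu>1 \<nu>2 \<longleftrightarrow> (\<forall>z. pmf \<nu>2 z = 0 \<longrightarrow> pmf \<nu>1 z = 0)"

definition KL_ball :: "'a set \<Rightarrow> 'a pmf \<Rightarrow> real \<Rightarrow> 'a pmf set" where
  "KL_ball X \<nu>h \<epsilon> = {\<nu> \<in> pmfs_on X. abs_cont \<nu>h \<nu> \<and> KL X \<nu>h \<nu> \<le> ennreal \<epsilon>}"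

end

theory Submission
  imports Defs
begin

lemma kl_f_nonneg: "t \<ge> 0 \<Longrightarrow> kl_f t \<ge> 0"
proof -
  assume t: "t \<ge> 0"
  show ?thesis
  proof (cases "t = 0")
    case True then show ?thesis by (simp add: kl_f_def)
  next
    case False
    hence tp: "t > 0" using t by simp
    have "ln (1/t) \<le> 1/t - 1" using tp by (intro ln_le_minus_one) simp
    hence "- ln t \<le> 1/t - 1" using tp by (simp add: ln_div)
    hence "t * (- ln t) \<le> t * (1/t - 1)" using tp by (intro mult_left_mono) auto
    hence "- t * ln t \<le> 1 - t" using tp by (simp add: algebra_simps)
    thus ?thesis by (simp add: kl_f_def)
  qed
qed

lemma log_sum:
  fixes a b :: "'a \<Rightarrow> real"
  assumes "finite B" "B \<noteq> {}" "\<And>z. z \<in> B \<Longrightarrow> a z > 0" "\<And>z. z \<in> B \<Longrightarrow> b z > 0"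
  shows "(\<Sum>z\<in>B. a z) * (ln (\<Sum>z\<in>B. a z) - ln (\<Sum>z\<in>B. b z)) \<le> (\<Sum>z\<in>B. a z * (ln (a z) - ln (b z)))"
proof -
  define q where "q = (\<Sum>z\<in>B. a z)"
  define c where "c = (\<Sum>z\<in>B. b z)"
  have qp: "q > 0" unfolding q_def using assms by (intro sum_pos) auto
  have cp: "c > 0" unfolding c_def using assms by (intro sum_pos) auto
  have each: "a z * (ln (b z) - ln (a z) + ln q - ln c) \<le> b z * q / c - a z" if z: "z \<in> B" for z
  proof -
    have az: "a z > 0" and bz: "b z > 0" using assms z by auto
    have "ln (b z * q / (a z * c)) \<le> b z * q / (a z * c) - 1"
      using az bz qp cp by (intro ln_le_minus_one) simp
    moreover have "ln (b z * q / (a z * c)) = ln (b z) + ln q - ln (a z) - ln c"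
      using az bz qp cp by (simp add: ln_div ln_mult)
    ultimately have "ln (b z) - ln (a z) + ln q - ln c \<le> b z * q / (a z * c) - 1" by simp
    hence "a z * (ln (b z) - ln (a z) + ln q - ln c) \<le> a z * (b z * q / (a z * c) - 1)"
      using az by (intro mult_left_mono) auto
    also have "\<dots> = b z * q / c - a z" using az cp by (simp add: field_simps)
    finally show ?thesis .
  qed
  have "(\<Sum>z\<in>B. a z * (ln (b z) - ln (a z) + ln q - ln c)) \<le> (\<Sum>z\<in>B. b z * q / c - a z)"
    using each by (intro sum_mono) auto
  also have "\<dots> = c * q / c - q" unfolding q_def c_def
    by (simp add: sum_subtractf sum_divide_distrib[symmetric] sum_distrib_right[symmetric])
  also have "\<dots> = 0" using cp by simp
  finally have le0: "(\<Sum>z\<in>B. a z * (ln (b z) - ln (a z) + ln q - ln c)) \<le> 0" .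
  have "(\<Sum>z\<in>B. a z * (ln (b z) - ln (a z) + ln q - ln c))
      = (\<Sum>z\<in>B. a z * (ln (b z) - ln (a z)) + a z * (ln q - ln c))"
    by (intro sum.cong) (auto simp: algebra_simps)
  also have "\<dots> = (\<Sum>z\<in>B. a z * (ln (b z) - ln (a z))) + q * (ln q - ln c)"
    unfolding q_def by (simp add: sum.distrib sum_distrib_right)
  finally have "(\<Sum>z\<in>B. a z * (ln (b z) - ln (a z))) + q * (ln q - ln c) \<le> 0" using le0 by simp
  moreover have "(\<Sum>z\<in>B. a z * (ln (b z) - ln (a z))) = - (\<Sum>z\<in>B. a z * (ln (a z) - ln (b z)))"
    by (simp add: sum_negf[symmetric] algebra_simps)
  ultimately show ?thesis unfolding q_def c_def by simp
qed

lemma KL_decomp: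
  assumes fin: "finite (set_pmf \<nu>h)" and AX: "set_pmf \<nu>h \<subseteq> X" and nX: "set_pmf \<nu> \<subseteq> X"
    and pos: "\<And>z. z \<in> set_pmf \<nu>h \<Longrightarrow> pmf \<nu> z > 0"
  shows "KL X \<nu>h \<nu> = ennreal (\<Sum>z\<in>set_pmf \<nu>h. pmf \<nu>h z * (ln (pmf \<nu>h z) - ln (pmf \<nu> z)))"
proof -
  define A where "A = set_pmf \<nu>h"
  define F where "F = (\<lambda>z. ennreal (kl_f (pmf \<nu>h z / pmf \<nu> z) * pmf \<nu> z))"
  define T where "T = (\<lambda>z. pmf \<nu>h z * (ln (pmf \<nu>h z) - ln (pmf \<nu> z)) - pmf \<nu>h z + pmf \<nu> z)"
  have TA: "kl_f (pmf \<nu>h z / pmf \<nu> z) * pmf \<nu> z = T z" if "z \<in> A" for z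
  proof -
    have a: "pmf \<nu>h z > 0" using that unfolding A_def by (simp add: pmf_positive)
    have b: "pmf \<nu> z > 0" using that pos unfolding A_def by auto
    show ?thesis unfolding kl_f_def T_def using a b by (simp add: ln_div field_simps)
  qed
  have Tnn: "T z \<ge> 0" if "z \<in> A" for z
    using TA[OF that] kl_f_nonneg[of "pmf \<nu>h z / pmf \<nu> z"] by (metis divide_nonneg_nonneg pmf_nonneg zero_le_mult_iff)
  have FnA: "F z = ennreal (pmf \<nu> z)" if "z \<notin> A" for z
  proof -
    have "pmf \<nu>h z = 0" using that unfolding A_def by (simp add: set_pmf_eq)
    thus ?thesis unfolding F_def kl_f_def by simp
  qed
  have "KL X \<nu>h \<nu> = (\<integral>\<^sup>+ z. F z * indicator X z \<partial>count_space UNIV)"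
    unfolding KL_def F_def by (simp add: nn_integral_count_space_indicator)
  also have "\<dots> = (\<integral>\<^sup>+ z. F z * indicator A z + F z * indicator (X - A) z \<partial>count_space UNIV)"
    using AX unfolding A_def by (intro nn_integral_cong) (auto simp: indicator_def)
  also have "\<dots> = (\<integral>\<^sup>+ z. F z * indicator A z \<partial>count_space UNIV) + (\<integral>\<^sup>+ z. F z * indicator (X - A) z \<partial>count_space UNIV)"
    by (intro nn_integral_add) auto
  also have "(\<integral>\<^sup>+ z. F z * indicator A z \<partial>count_space UNIV) = (\<integral>\<^sup>+ z. F z \<partial>count_space A)"
    by (simp add: nn_integral_count_space_indicator)
  also have "\<dots> = (\<Sum>z\<in>A. F z)" using fin unfolding A_def by (simp add: nn_integral_count_space_finite)
  also have "\<dots> = (\<Sum>z\<in>A. ennreal (T z))" unfolding F_def using TA by (intro sum.cong) auto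
  also have "\<dots> = ennreal (\<Sum>z\<in>A. T z)" using Tnn by (intro sum_ennreal) auto
  also have "(\<integral>\<^sup>+ z. F z * indicator (X - A) z \<partial>count_space UNIV) = (\<integral>\<^sup>+ z. ennreal (pmf \<nu> z) \<partial>count_space (X - A))"
    by (subst nn_integral_count_space_indicator[symmetric]) (auto intro!: nn_integral_cong simp: FnA indicator_def)
  also have "\<dots> = emeasure (measure_pmf \<nu>) (X - A)" by (simp add: nn_integral_pmf)
  also have "\<dots> = ennreal (measure_pmf.prob \<nu> (X - A))" by (simp add: measure_pmf.emeasure_eq_measure)
  also have "measure_pmf.prob \<nu> (X - A) = measure_pmf.prob \<nu> X - measure_pmf.prob \<nu> A"
    using AX unfolding A_def by (intro measure_pmf.finite_measure_Diff) auto
  also have "measure_pmf.prob \<nu> X = 1" using nX by (subst measure_pmf.prob_eq_1) (auto simp: AE_measure_pmf_iff)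
  also have "measure_pmf.prob \<nu> A = (\<Sum>z\<in>A. pmf \<nu> z)" using fin unfolding A_def by (simp add: measure_measure_pmf_finite)
  also have "ennreal (\<Sum>z\<in>A. T z) + ennreal (1 - (\<Sum>z\<in>A. pmf \<nu> z)) = ennreal ((\<Sum>z\<in>A. T z) + (1 - (\<Sum>z\<in>A. pmf \<nu> z)))"
  proof -
    have "(\<Sum>z\<in>A. pmf \<nu> z) = measure_pmf.prob \<nu> A" using fin unfolding A_def by (simp add: measure_measure_pmf_finite)
    also have "\<dots> \<le> 1" by (rule measure_pmf.prob_le_1)
    finally show ?thesis using Tnn by (intro ennreal_plus[symmetric] sum_nonneg) (auto simp: sum_nonneg)
  qed
  also have "(\<Sum>z\<in>A. T z) + (1 - (\<Sum>z\<in>A. pmf \<nu> z)) = (\<Sum>z\<in>A. pmf \<nu>h z * (ln (pmf \<nu>h z) - ln (pmf \<nu> z)))"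
  proof -
    have "(\<Sum>z\<in>A. pmf \<nu>h z) = 1" using fin unfolding A_def by (intro sum_pmf_eq_1) auto
    thus ?thesis unfolding T_def by (simp add: sum.distrib sum_subtractf)
  qed
  finally show ?thesis unfolding A_def .
qed

definition gfun :: "real \<Rightarrow> real \<Rightarrow> real" where
  "gfun p t = p * (ln p - ln t) + (1 - p) * (ln (1 - p) - ln (1 - t))"

lemma gfun_cont: "0 < a \<Longrightarrow> b < 1 \<Longrightarrow> continuous_on {a..b} (gfun p)"
  unfolding gfun_def by (intro continuous_intros) auto

lemma gfun_mono:
  assumes "0 < p" "p \<le> a" "a < b" "b < 1"
  shows "gfun p a < gfun p b"
proof (rule DERIV_pos_imp_increasing_open[OF assms(3)])
  fix x assume x: "a < x" "x < b"
  have "DERIV (gfun p) x :> p * (- (1 / x)) + (1 - p) * (- (- 1 / (1 - x)))"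
    unfolding gfun_def using x assms
    by (auto intro!: derivative_eq_intros)
  moreover have "p * (- (1 / x)) + (1 - p) * (- (- 1 / (1 - x))) = (x - p) / (x * (1 - x))"
    using x assms by (simp add: field_simps)
  moreover have "(x - p) / (x * (1 - x)) > 0" using x assms by (intro divide_pos_pos mult_pos_pos) auto
  ultimately show "\<exists>y. DERIV (gfun p) x :> y \<and> 0 < y" by auto
next
  show "continuous_on {a..b} (gfun p)" using assms by (intro gfun_cont) auto
qed

lemma scalar_opt:
  assumes p: "0 \<le> p" "p < 1" and e: "\<epsilon> \<ge> 0"
  shows "\<exists>t. p \<le> t \<and> t < 1 \<and> gfun p t = \<epsilon> \<and> (\<forall>s. p \<le> s \<longrightarrow> s < 1 \<longrightarrow> gfun p s \<le> \<epsilon> \<longrightarrow> s \<le> t)"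
proof (cases "p = 0")
  case True
  define t where "t = 1 - exp (- \<epsilon>)"
  have "exp (- \<epsilon>) \<le> 1" using e by simp
  hence "0 \<le> t" "t < 1" unfolding t_def by auto
  moreover have "gfun p t = \<epsilon>" unfolding gfun_def t_def True by simp
  moreover have "s \<le> t" if "p \<le> s" "s < 1" "gfun p s \<le> \<epsilon>" for s
  proof -
    have "- ln (1 - s) \<le> \<epsilon>" using that unfolding gfun_def True by simp
    hence "- \<epsilon> \<le> ln (1 - s)" by simp
    hence "exp (- \<epsilon>) \<le> exp (ln (1 - s))" by simp
    hence "exp (- \<epsilon>) \<le> 1 - s" using that by simp
    thus ?thesis unfolding t_def by simp
  qed
  ultimately show ?thesis using True by auto
next
  case False
  hence pp: "p > 0" using p by simp
  define K where "K = (\<epsilon> - p * ln p + 1) / (1 - p)"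
  have plnp: "p * ln p \<le> 0" using pp p by (simp add: mult_nonneg_nonpos)
  have Kp: "K > 0" unfolding K_def using p e plnp by (intro divide_pos_pos) auto
  define b where "b = 1 - (1 - p) * exp (- K)"
  have eK: "exp (- K) < 1" "exp (-K) > 0" using Kp by auto
  have b1: "b < 1" unfolding b_def using p eK by simp
  have "b - p = (1 - p) * (1 - exp (- K))" unfolding b_def by (simp add: algebra_simps)
  moreover have "(1 - p) * (1 - exp (- K)) > 0" using p eK by (intro mult_pos_pos) auto
  ultimately have pb: "p < b" by linarith
  have lnb: "ln b \<le> 0" using pb b1 pp by simp
  have "ln (1 - b) = ln (1 - p) - K" unfolding b_def using p eK by (simp add: ln_mult)
  hence "gfun p b = p * ln p - p * ln b + (1 - p) * K" unfolding gfun_def by (simp add: algebra_simps)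
      (metis (no_types, opaque_lifting) add.commute add.left_commute distrib_left mult.commute)
  also have "(1 - p) * K = \<epsilon> - p * ln p + 1" unfolding K_def using p by simp
  finally have "gfun p b = \<epsilon> + 1 - p * ln b" by simp
  moreover have "p * ln b \<le> 0" using lnb pp by (simp add: mult_nonneg_nonpos)
  ultimately have gb: "gfun p b \<ge> \<epsilon>" by simp
  have gp: "gfun p p = 0" unfolding gfun_def by simp
  obtain t where t: "p \<le> t" "t \<le> b" "gfun p t = \<epsilon>"
    using IVT'[of "gfun p" p \<epsilon> b] gp gb e pb b1 pp gfun_cont[of p b p] by auto
  have "s \<le> t" if "p \<le> s" "s < 1" "gfun p s \<le> \<epsilon>" for s
  proof (rule ccontr)
    assume "\<not> s \<le> t"
    hence "gfun p t < gfun p s" using t that pp by (intro gfun_mono) auto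
    thus False using t that by simp
  qed
  thus ?thesis using t b1 by (intro exI[of _ t]) auto
qed

lemma sum_split_pt: "finite A \<Longrightarrow> sum h A = sum h (A - {x}) + (if x \<in> A then h x else 0)"
  by (cases "x \<in> A") (simp_all add: sum.remove add.commute)

theorem mainTheorem2:
  fixes X :: "(real ^ 'm) set" and \<nu>h :: "(real ^ 'm) pmf" and N :: nat
    and xh :: "nat \<Rightarrow> real ^ 'm" and w :: "nat \<Rightarrow> real"
    and \<epsilon> :: real and x :: "real ^ 'm"
  assumes "countable X"
    and "inj_on xh {..<N}"
    and "xh ` {..<N} \<subseteq> X"
    and "\<forall>j<N. w j > 0"
    and "(\<Sum>j<N. w j) = 1"
    and "\<forall>z. pmf \<nu>h z = (\<Sum>j<N. if xh j = z then w j else 0)"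
    and "\<epsilon> \<ge> 0"
    and "x \<in> X"
  shows "\<exists>\<nu>s \<in> KL_ball X \<nu>h \<epsilon>.
           (SUP \<nu>\<in>KL_ball X \<nu>h \<epsilon>. pmf \<nu> x) = pmf \<nu>s x
         \<and> card (set_pmf \<nu>s) \<le> N + 1
         \<and> set_pmf \<nu>s \<subseteq> set_pmf \<nu>h \<union> {x}"
proof -
  define A where "A = set_pmf \<nu>h"
  define K where "K = KL_ball X \<nu>h \<epsilon>"
  define p where "p = pmf \<nu>h x"
  have e: "\<epsilon> \<ge> 0" using assms by simp
  have Asub: "A \<subseteq> xh ` {..<N}"
  proof
    fix z assume z: "z \<in> A"
    show "z \<in> xh ` {..<N}"
    proof (rule ccontr)
      assume "z \<notin> xh ` {..<N}"
      hence "pmf \<nu>h z = 0" using assms(6) by (auto intro!: sum.neutral)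
      thus False using z unfolding A_def by (simp add: set_pmf_eq)
    qed
  qed
  have fin: "finite A" using Asub finite_subset by blast
  have AX: "A \<subseteq> X" using Asub assms(3) by blast
  have cardA: "card A \<le> N"
    using card_mono[OF _ Asub] card_image_le[of "{..<N}" xh] by simp
  have Apos: "pmf \<nu>h z > 0" if "z \<in> A" for z using that unfolding A_def by (simp add: pmf_positive)
  have sumA: "(\<Sum>z\<in>A. pmf \<nu>h z) = 1" using fin unfolding A_def by (intro sum_pmf_eq_1) auto
  have p01: "0 \<le> p" "p \<le> 1" unfolding p_def by (auto simp: pmf_le_1)
  have sumB: "(\<Sum>z\<in>A - {x}. pmf \<nu>h z) = 1 - p"
    using sum_split_pt[OF fin, of "pmf \<nu>h" x] sumA unfolding p_def A_def
    by (auto simp: set_pmf_eq split: if_splits)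
  have pnA: "x \<notin> A \<Longrightarrow> p = 0" unfolding p_def A_def by (simp add: set_pmf_eq)
  have hatK: "\<nu>h \<in> K"
  proof -
    have "KL X \<nu>h \<nu>h = ennreal (\<Sum>z\<in>A. pmf \<nu>h z * (ln (pmf \<nu>h z) - ln (pmf \<nu>h z)))"
      unfolding A_def using fin AX Apos unfolding A_def by (intro KL_decomp) auto
    thus ?thesis unfolding K_def KL_ball_def pmfs_on_def abs_cont_def using AX unfolding A_def by simp
  qed
  have bound: "pmf \<nu> x < 1 \<and> gfun p (pmf \<nu> x) \<le> \<epsilon>" if nK: "\<nu> \<in> K" and sp: "pmf \<nu> x > p" for \<nu>
  proof -
    define s where "s = pmf \<nu> x"
    define B where "B = A - {x}"
    have nX: "set_pmf \<nu> \<subseteq> X" and ac: "abs_cont \<nu>h \<nu>" and kl: "KL X \<nu>h \<nu> \<le> ennreal \<epsilon>"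
      using nK unfolding K_def KL_ball_def pmfs_on_def by auto
    have pos: "pmf \<nu> z > 0" if "z \<in> A" for z
      using ac Apos[OF that] unfolding abs_cont_def by (metis less_eq_real_def pmf_nonneg)
    have p1: "p < 1" using sp pmf_le_1[of \<nu> x] by simp
    have Bne: "B \<noteq> {}"
    proof
      assume "B = {}"
      hence "set_pmf \<nu>h \<subseteq> {x}" unfolding B_def A_def by auto
      hence "(\<Sum>z\<in>{x}. pmf \<nu>h z) = 1" by (intro sum_pmf_eq_1) auto
      thus False using p1 unfolding p_def by simp
    qed
    have finB: "finite B" unfolding B_def using fin by simp
    define c where "c = (\<Sum>z\<in>B. pmf \<nu> z)"
    have cp: "c > 0" unfolding c_def using finB Bne pos unfolding B_def by (intro sum_pos) auto
    have "s + c = (\<Sum>z\<in>insert x B. pmf \<nu> z)" unfolding s_def c_def using sum.insert[OF finB, of x "pmf \<nu>"] by (simp add: B_def)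
    also have "\<dots> = measure_pmf.prob \<nu> (insert x B)" using finB by (simp add: measure_measure_pmf_finite)
    also have "\<dots> \<le> 1" by (rule measure_pmf.prob_le_1)
    finally have sc: "s + c \<le> 1" .
    have s1: "s < 1" using sc cp by simp
    have s0: "s > 0" using sp p01 unfolding s_def by simp
    have "KL X \<nu>h \<nu> = ennreal (\<Sum>z\<in>A. pmf \<nu>h z * (ln (pmf \<nu>h z) - ln (pmf \<nu> z)))"
      unfolding A_def using fin AX nX pos unfolding A_def by (intro KL_decomp) auto
    hence sle: "(\<Sum>z\<in>A. pmf \<nu>h z * (ln (pmf \<nu>h z) - ln (pmf \<nu> z))) \<le> \<epsilon>" using kl e by simp
    have "(\<Sum>z\<in>A. pmf \<nu>h z * (ln (pmf \<nu>h z) - ln (pmf \<nu> z)))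
        = (\<Sum>z\<in>B. pmf \<nu>h z * (ln (pmf \<nu>h z) - ln (pmf \<nu> z))) + p * (ln p - ln s)"
      using sum_split_pt[OF fin, of "\<lambda>z. pmf \<nu>h z * (ln (pmf \<nu>h z) - ln (pmf \<nu> z))" x] pnA
      unfolding B_def p_def s_def by (auto split: if_splits)
    moreover have "(1 - p) * (ln (1 - p) - ln c) \<le> (\<Sum>z\<in>B. pmf \<nu>h z * (ln (pmf \<nu>h z) - ln (pmf \<nu> z)))"
      using log_sum[OF finB Bne, of "pmf \<nu>h" "pmf \<nu>"] Apos pos sumB unfolding B_def c_def by auto
    moreover have "(1 - p) * (ln (1 - p) - ln (1 - s)) \<le> (1 - p) * (ln (1 - p) - ln c)"
      using p1 cp sc by (intro mult_left_mono) auto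
    ultimately have "gfun p s \<le> \<epsilon>" using sle unfolding gfun_def by linarith
    thus ?thesis using s1 unfolding s_def by simp
  qed
  show ?thesis
  proof (cases "p = 1")
    case True
    have "(SUP \<nu>\<in>K. pmf \<nu> x) = pmf \<nu>h x"
    proof (rule cSup_eq_maximum)
      show "pmf \<nu>h x \<in> (\<lambda>\<nu>. pmf \<nu> x) ` K" using hatK by auto
      show "y \<le> pmf \<nu>h x" if "y \<in> (\<lambda>\<nu>. pmf \<nu> x) ` K" for y
        using that True unfolding p_def by (auto simp: pmf_le_1)
    qed
    moreover have "card (set_pmf \<nu>h) \<le> N + 1" using cardA unfolding A_def by simp
    ultimately show ?thesis using hatK unfolding K_def by auto
  next
    case False
    hence p1: "p < 1" using p01 by simp
    obtain t where t: "p \<le> t" "t < 1" "gfun p t = \<epsilon>"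
      and tmax: "\<And>s. p \<le> s \<Longrightarrow> s < 1 \<Longrightarrow> gfun p s \<le> \<epsilon> \<Longrightarrow> s \<le> t"
      using scalar_opt[OF p01(1) p1 e] by blast
    define c where "c = (1 - t) / (1 - p)"
    have cp: "c > 0" unfolding c_def using t p1 by simp
    define f where "f = (\<lambda>z. if z = x then t else c * pmf \<nu>h z)"
    have fnn: "f z \<ge> 0" for z unfolding f_def using cp t p01 by auto
    have fS: "f z = 0" if "z \<notin> A \<union> {x}" for z
      using that unfolding f_def A_def by (auto simp: set_pmf_eq)
    have finS: "finite (A \<union> {x})" using fin by simp
    have "(\<integral>\<^sup>+ z. ennreal (f z) \<partial>count_space UNIV) = (\<integral>\<^sup>+ z. ennreal (f z) * indicator (A \<union> {x}) z \<partial>count_space UNIV)"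
      by (intro nn_integral_cong) (auto simp: indicator_def fS)
    also have "\<dots> = (\<integral>\<^sup>+ z. ennreal (f z) \<partial>count_space (A \<union> {x}))"
      by (simp add: nn_integral_count_space_indicator)
    also have "\<dots> = (\<Sum>z\<in>A \<union> {x}. ennreal (f z))" using finS by (simp add: nn_integral_count_space_finite)
    also have "\<dots> = ennreal (\<Sum>z\<in>A \<union> {x}. f z)" using fnn by (intro sum_ennreal) auto
    also have "(\<Sum>z\<in>A \<union> {x}. f z) = (\<Sum>z\<in>A - {x}. f z) + t"
      using sum_split_pt[OF finS, of f x] unfolding f_def by simp
    also have "(\<Sum>z\<in>A - {x}. f z) = c * (1 - p)" unfolding f_def using sumB
      by (simp add: sum_distrib_left[symmetric])
    also have "c * (1 - p) + t = 1" unfolding c_def using p1 by simp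
    finally have int1: "(\<integral>\<^sup>+ z. ennreal (f z) \<partial>count_space UNIV) = 1" by simp
    define \<nu>s where "\<nu>s = embed_pmf f"
    have pmfs: "pmf \<nu>s z = f z" for z unfolding \<nu>s_def using fnn int1 by (intro pmf_embed_pmf) auto
    have sets: "set_pmf \<nu>s \<subseteq> A \<union> {x}" using fS unfolding set_pmf_eq pmfs by auto
    have possA: "pmf \<nu>s z > 0" if "z \<in> A" for z
    proof (cases "z = x")
      case True
      thus ?thesis using that Apos t unfolding pmfs f_def p_def by force
    next
      case False
      thus ?thesis using that Apos cp unfolding pmfs f_def by simp
    qed
    have nsX: "set_pmf \<nu>s \<subseteq> X" using sets AX assms(8) by auto
    have "KL X \<nu>h \<nu>s = ennreal (\<Sum>z\<in>A. pmf \<nu>h z * (ln (pmf \<nu>h z) - ln (pmf \<nu>s z)))"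
      unfolding A_def using fin AX nsX possA unfolding A_def by (intro KL_decomp) auto
    also have "(\<Sum>z\<in>A. pmf \<nu>h z * (ln (pmf \<nu>h z) - ln (pmf \<nu>s z))) = gfun p t"
    proof -
      have "(\<Sum>z\<in>A - {x}. pmf \<nu>h z * (ln (pmf \<nu>h z) - ln (pmf \<nu>s z)))
          = (\<Sum>z\<in>A - {x}. pmf \<nu>h z * (- ln c))"
      proof (intro sum.cong refl)
        fix z assume z: "z \<in> A - {x}"
        have "ln (pmf \<nu>s z) = ln c + ln (pmf \<nu>h z)"
          using z cp Apos[of z] unfolding pmfs f_def by (simp add: ln_mult)
        thus "pmf \<nu>h z * (ln (pmf \<nu>h z) - ln (pmf \<nu>s z)) = pmf \<nu>h z * (- ln c)" by simp
      qed
      also have "\<dots> = (1 - p) * (- ln c)" using sumB by (simp add: sum_negf sum_distrib_right[symmetric])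
      also have "\<dots> = (1 - p) * (ln (1 - p) - ln (1 - t))" unfolding c_def using p1 t by (simp add: ln_div)
      finally have "(\<Sum>z\<in>A - {x}. pmf \<nu>h z * (ln (pmf \<nu>h z) - ln (pmf \<nu>s z))) = (1 - p) * (ln (1 - p) - ln (1 - t))" .
      moreover have "(if x \<in> A then pmf \<nu>h x * (ln (pmf \<nu>h x) - ln (pmf \<nu>s x)) else 0) = p * (ln p - ln t)"
        using pnA unfolding p_def pmfs f_def by auto
      ultimately show ?thesis
        using sum_split_pt[OF fin, of "\<lambda>z. pmf \<nu>h z * (ln (pmf \<nu>h z) - ln (pmf \<nu>s z))" x]
        unfolding gfun_def by simp
    qed
    finally have klv: "KL X \<nu>h \<nu>s = ennreal \<epsilon>" using t by simp
    have acs: "abs_cont \<nu>h \<nu>s" unfolding abs_cont_def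
    proof (intro allI impI)
      fix z assume "pmf \<nu>s z = 0"
      thus "pmf \<nu>h z = 0" using possA unfolding A_def by (metis less_irrefl set_pmf_eq mem_Collect_eq)
    qed
    have nsK: "\<nu>s \<in> K" unfolding K_def KL_ball_def pmfs_on_def using nsX acs klv by simp
    have px: "pmf \<nu>s x = t" unfolding pmfs f_def by simp
    have "(SUP \<nu>\<in>K. pmf \<nu> x) = pmf \<nu>s x"
    proof (rule cSup_eq_maximum)
      show "pmf \<nu>s x \<in> (\<lambda>\<nu>. pmf \<nu> x) ` K" using nsK by auto
      show "y \<le> pmf \<nu>s x" if yK: "y \<in> (\<lambda>\<nu>. pmf \<nu> x) ` K" for y
      proof -
        obtain \<nu> where \<nu>: "\<nu> \<in> K" "y = pmf \<nu> x" using yK by auto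
        show ?thesis
        proof (cases "pmf \<nu> x > p")
          case True
          thus ?thesis using bound[OF \<nu>(1) True] tmax[of "pmf \<nu> x"] \<nu> px by simp
        next
          case False
          thus ?thesis using \<nu> px t by simp
        qed
      qed
    qed
    moreover have "card (set_pmf \<nu>s) \<le> N + 1"
    proof -
      have "card (set_pmf \<nu>s) \<le> card (A \<union> {x})" using sets finS by (intro card_mono)
      also have "\<dots> \<le> card A + 1" using card_Un_le[of A "{x}"] by simp
      finally show ?thesis using cardA by simp
    qed
    ultimately show ?thesis using nsK sets unfolding K_def A_def by auto
  qed
qed

end
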